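(* Let $\tau=\frac{1+\sqrt5}{2}$, $\sigma=\frac{1-\sqrt5}{2}$, let $l_1,\dots,l_6$ be the standard orthonormal basis of $\mathbb{R}^6$, and let $D_6=\{\sum_{i=1}^6 m_i l_i : m_i\in\mathbb{Z},\ \sum_i m_i \text{ even}\}$. Let $\pi_\parallel:\mathbb{R}^6\to\mathbb{R}^3$ be the linear map with, writing $s=\sqrt{2(2+\tau)}$, $$\pi_\parallel(l_1)=\tfrac1s(1,\tau,0),\ \pi_\parallel(l_2)=\tfrac1s(-1,\tau,0),\ \pi_\parallel(l_3)=\tfrac1s(0,1,\tau),\ \pi_\parallel(l_4)=\tfrac1s(0,1,-\tau),\ \pi_\parallel(l_5)=\tfrac1s(\tau,0,1),\ \pi_\parallel(l_6)=\tfrac1s(-\tau,0,1).$$ Let $H_3\subset O(3)$ be the group generated by $$R_1=\begin{bmatrix}-1&0&0\\0&1&0\\0&0&1\end{bmatrix},\quad R_2=\frac12\begin{bmatrix}1&-\sigma&-\tau\\-\sigma&\tau&1\\-\tau&1&\sigma\end{bmatrix},\quad R_3=\begin{bmatrix}1&0&0\\0&1&0\\0&0&-1\end{bmatrix}.$$ Let $m_1,m_2\in\mathbb{Z}$ with $m_1+m_2$ even and $(m_1,m_2)\neq(0,0)$, and put $c=\sqrt{\tfrac{2}{2+\tau}}\,(m_1-m_2+2m_2\tau)$. Then each of the following seven vectors $\lambda$ lies in $D_6$, its projection $\pi_\parallel(\lambda)$ equals the stated vector of $\mathbb{R}^3$, and the $H_3$-orbit of $\pi_\parallel(\lambda)$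 is the vertex set of the stated polyhedron: (1) $\lambda=m_1l_1+m_2(l_2+l_3+l_4+l_5-l_6)$; $\pi_\parallel(\lambda)=\frac c2(1,\tau,0)$; regular icosahedron. (2) $\lambda=\frac12[(m_1+3m_2)(l_1+l_2+l_3)+(m_1-m_2)(l_4+l_5+l_6)]$; $\pi_\parallel(\lambda)=\frac c2(0,\tau^2,1)$; regular dodecahedron. (3) $\lambda=(m_1+m_2)(l_1+l_2)+2m_2(l_3+l_4)$; $\pi_\parallel(\lambda)=c(0,\tau,0)$; icosidodecahedron. (4) $\lambda=(2m_1+m_2)l_1+(m_1+2m_2)l_2+m_2(3l_3+3l_4+l_5-l_6)$; $\pi_\parallel(\lambda)=\frac c2(1,3\tau,0)$; truncated icosahedron. (5) $\lambda=\frac12[3(m_1+m_2)l_1+(m_1+5m_2)(l_2+l_3)+(m_1+m_2)(l_4+l_5)+(m_1-3m_2)l_6]$; $\pi_\parallel(\lambda)=\frac c2(1,2\tau+1,1)$; small rhombicosidodecahedron. (6) $\lambda=\frac12[(3m_1+5m_2)(l_1+l_2)+(m_1+7m_2)l_3+(m_1+3m_2)l_4+(m_1-m_2)(l_5+l_6)]$; $\pi_\parallel(\lambda)=\frac c2(0,3\tau+1,1)$; truncated dodecahedron. (7) $\lambda=\frac12[5(m_1+m_2)l_1+(3m_1+7m_2)l_2+(m_1+9m_2)l_3+(m_1+5m_2)l_4+(m_1+m_2)l_5+(m_1-3m_2)l_6]$; $\pi_\parallel(\lambda)=\frac c2(1,4\tau+1,1)$; great rhombicosidodecahedron.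
   Context: $D_6$ is the root lattice of type $D_6$, written in the orthonormal basis $l_i$. The map $\pi_\parallel$ is the projection onto one of two complementary 3-dimensional subspaces invariant under an icosahedral subgroup of the point group of $D_6$; $H_3$ is the icosahedral reflection group (of order 120) acting on that subspace. The weights of $D_6$ are $\omega_1=l_1$, $\omega_2=l_1+l_2$, $\omega_3=l_1+l_2+l_3$, $\omega_4=l_1+l_2+l_3+l_4$, $\omega_5=\frac12(l_1+\dots+l_5-l_6)$, $\omega_6=\frac12(l_1+\dots+l_6)$; in these terms the seven vectors are respectively $(m_1-m_2)\omega_1+2m_2\omega_5$, $(m_1-m_2)\omega_6+2m_2\omega_3$, $(m_1-m_2)\omega_2+2m_2\omega_4$, $(m_1-m_2)(\omega_1+\omega_2)+2m_2(\omega_4+\omega_5)$, $(m_1-m_2)(\omega_1+\omega_6)+2m_2(\omega_3+\omega_5)$, $(m_1-m_2)(\omega_2+\omega_6)+2m_2(\omega_3+\omega_4)$, $(m_1-m_2)(\omega_1+\omega_2+\omega_6)+2m_2(\omega_3+\omega_4+\omega_5)$. *)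

theory Defs
  imports "HOL-Analysis.Analysis"
begin

definition tau :: real where "tau = (1 + sqrt 5) / 2"
definition sigma :: real where "sigma = (1 - sqrt 5) / 2"

text \<open>Standard orthonormal basis l_1, ..., l_6 of R^6 (indices are elements of the type 6;
  the literal 6 denotes the sixth index).\<close>
definition l :: "6 \<Rightarrow> real^6" where "l i = axis i 1"

definition D6 :: "(real^6) set" where
  "D6 = {x. (\<forall>i. x $ i \<in> \<int>) \<and> (\<exists>k::int. (\<Sum>i\<in>UNIV. x $ i) = 2 * of_int k)}"

definition pi_par :: "real^6 \<Rightarrow> real^3" where
  "pi_par x = (1 / sqrt (2 * (2 + tau))) *\<^sub>R
     (  (x $ 1) *\<^sub>R vector [1, tau, 0]
      + (x $ 2) *\<^sub>R vector [-1, tau, 0]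
      + (x $ 3) *\<^sub>R vector [0, 1, tau]
      + (x $ 4) *\<^sub>R vector [0, 1, -tau]
      + (x $ 5) *\<^sub>R vector [tau, 0, 1]
      + (x $ 6) *\<^sub>R vector [-tau, 0, 1])"

definition R1 :: "real^3^3" where
  "R1 = vector [vector [-1, 0, 0], vector [0, 1, 0], vector [0, 0, 1]]"
definition R2 :: "real^3^3" where
  "R2 = (1/2) *\<^sub>R vector [vector [1, -sigma, -tau], vector [-sigma, tau, 1], vector [-tau, 1, sigma]]"
definition R3 :: "real^3^3" where
  "R3 = vector [vector [1, 0, 0], vector [0, 1, 0], vector [0, 0, -1]]"

inductive_set H3 :: "(real^3^3) set" where
  H3_id: "mat 1 \<in> H3"
| H3_gen: "A \<in> H3 \<Longrightarrow> g \<in> {R1, R2, R3} \<Longrightarrow> g ** A \<in> H3"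
| H3_inv: "A \<in> H3 \<Longrightarrow> g \<in> {R1, R2, R3} \<Longrightarrow> matrix_inv g ** A \<in> H3"

definition H3_orbit :: "real^3 \<Rightarrow> (real^3) set" where
  "H3_orbit p = {A *v p | A. A \<in> H3}"

text \<open>Standard vertex coordinates: all even (cyclic) permutations of all sign choices.\<close>
definition EP :: "real \<Rightarrow> real \<Rightarrow> real \<Rightarrow> (real^3) set" where
  "EP a b c = (\<Union>(s1,s2,s3) \<in> {1,-1} \<times> {1,-1} \<times> {1,-1::real}.
      {vector [s1*a, s2*b, s3*c], vector [s2*b, s3*c, s1*a], vector [s3*c, s1*a, s2*b]})"

definition std_icosahedron :: "(real^3) set" where
  "std_icosahedron = EP 0 1 tau"
definition std_dodecahedron :: "(real^3) set" where
  "std_dodecahedron = EP 1 1 1 \<union> EP 0 (1/tau) tau"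
definition std_icosidodecahedron :: "(real^3) set" where
  "std_icosidodecahedron = EP 0 0 tau \<union> EP (1/2) (tau/2) (tau^2/2)"
definition std_truncated_icosahedron :: "(real^3) set" where
  "std_truncated_icosahedron = EP 0 1 (3*tau) \<union> EP 1 (2+tau) (2*tau) \<union> EP tau 2 (tau^3)"
definition std_small_rhombicosidodecahedron :: "(real^3) set" where
  "std_small_rhombicosidodecahedron = EP 1 1 (tau^3) \<union> EP (tau^2) tau (2*tau) \<union> EP (2+tau) 0 (tau^2)"
definition std_truncated_dodecahedron :: "(real^3) set" where
  "std_truncated_dodecahedron = EP 0 (1/tau) (2+tau) \<union> EP (1/tau) tau (2*tau) \<union> EP tau 2 (tau+1)"
definition std_great_rhombicosidodecahedron :: "(real^3) set" where
  "std_great_rhombicosidodecahedron = EP (1/tau) (1/tau) (3+tau) \<union> EP (2/tau) tau (1+2*tau)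
     \<union> EP (1/tau) (tau^2) (3*tau - 1) \<union> EP (2*tau - 1) 2 (2+tau) \<union> EP tau 3 (2*tau)"

definition similar_to :: "(real^3) set \<Rightarrow> (real^3) set \<Rightarrow> bool" where
  "similar_to S T \<longleftrightarrow> (\<exists>r Q b. r > 0 \<and> orthogonal_matrix Q \<and> S = (\<lambda>x. r *\<^sub>R (Q *v x) + b) ` T)"

end

theory Submission
  imports Defs
begin

lemma tau_sq: "tau * tau = tau + 1"
  unfolding tau_def by (simp add: field_simps)

lemma sigma_eq: "sigma = 1 - tau" unfolding sigma_def tau_def by (simp add: field_simps)

lemma tau_pos: "tau > 1" unfolding tau_def
proof -
  have "sqrt 5 > 1" by simp
  then show "(1 + sqrt 5) / 2 > 1" by simp
qed

type_synonym zt = "int \<times> int"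
type_synonym pt = "zt \<times> zt \<times> zt"

fun zv :: "zt \<Rightarrow> real" where "zv (a,b) = of_int a + of_int b * tau"
definition ci :: "zt \<Rightarrow> real" where "ci p = zv p / 2"
fun addZ :: "zt \<Rightarrow> zt \<Rightarrow> zt" where "addZ (a,b) (c,d) = (a+c, b+d)"
fun mulZ :: "zt \<Rightarrow> zt \<Rightarrow> zt" where "mulZ (a,b) (c,d) = (a*c+b*d, a*d+b*c+b*d)"
fun negZ :: "zt \<Rightarrow> zt" where "negZ (a,b) = (-a,-b)"
fun dblZ :: "zt \<Rightarrow> zt" where "dblZ (a,b) = (2*a,2*b)"

lemma zv_add: "zv (addZ p q) = zv p + zv q" by (cases p; cases q) (simp add: algebra_simps)
lemma zv_mul: "zv (mulZ p q) = zv p * zv q"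
proof (cases p; cases q)
  fix a b c d assume "p = (a,b)" "q = (c,d)"
  have "\<And>t::real. t * t = t + 1 \<Longrightarrow> (of_int a + of_int b * t) * (of_int c + of_int d * t)
     = of_int (a*c+b*d) + of_int (a*d+b*c+b*d) * t" by simp algebra
  then show ?thesis using tau_sq \<open>p = (a,b)\<close> \<open>q = (c,d)\<close> by simp
qed
lemma zv_neg: "zv (negZ p) = - zv p" by (cases p) simp
lemma zv_dbl: "zv (dblZ p) = 2 * zv p" by (cases p) (simp add: algebra_simps)

fun interp :: "pt \<Rightarrow> real^3" where
  "interp (x,y,z) = vector [ci x, ci y, ci z]"

fun R1e :: "pt \<Rightarrow> pt" where "R1e (x,y,z) = (negZ x, y, z)"
fun R3e :: "pt \<Rightarrow> pt" where "R3e (x,y,z) = (x, y, negZ z)"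
fun dblP :: "pt \<Rightarrow> pt" where "dblP (x,y,z) = (dblZ x, dblZ y, dblZ z)"
fun R2d :: "pt \<Rightarrow> pt" where
  "R2d (x,y,z) =
    (addZ (addZ x (mulZ (-1,1) y)) (mulZ (0,-1) z),
     addZ (addZ (mulZ (-1,1) x) (mulZ (0,1) y)) z,
     addZ (addZ (mulZ (0,-1) x) y) (mulZ (1,-1) z))"

lemma mat3_mult: "(vector [vector [a11,a12,a13], vector [a21,a22,a23], vector [a31,a32,a33]] :: real^3^3)
   *v vector [x1,x2,x3] = vector [a11*x1+a12*x2+a13*x3, a21*x1+a22*x2+a23*x3, a31*x1+a32*x2+a33*x3]"
  by (simp add: vec_eq_iff forall_3 matrix_vector_mult_def sum_3)

lemma R1_act: "R1 *v interp p = interp (R1e p)"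
  by (cases p) (auto simp: R1_def mat3_mult ci_def zv_neg)

lemma R3_act: "R3 *v interp p = interp (R3e p)"
  by (cases p) (auto simp: R3_def mat3_mult ci_def zv_neg)

lemma scaleR_mat_mult: "((c::real) *\<^sub>R (M::real^3^3)) *v v = c *\<^sub>R (M *v v)"
  by (simp add: vec_eq_iff matrix_vector_mult_def sum_distrib_left algebra_simps)

lemma R2_act:
  assumes "R2d p = dblP q" shows "R2 *v interp p = interp q"
proof -
  obtain x y z where p: "p = (x,y,z)" by (cases p) auto
  obtain u v w where q: "q = (u,v,w)" by (cases q) auto
  have e: "dblZ u = addZ (addZ x (mulZ (-1,1) y)) (mulZ (0,-1) z)"
          "dblZ v = addZ (addZ (mulZ (-1,1) x) (mulZ (0,1) y)) z"
          "dblZ w = addZ (addZ (mulZ (0,-1) x) y) (mulZ (1,-1) z)"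
    using assms p q by auto
  have f: "2 * zv u = zv x + (tau - 1) * zv y - tau * zv z"
          "2 * zv v = (tau - 1) * zv x + tau * zv y + zv z"
          "2 * zv w = - tau * zv x + zv y + (1 - tau) * zv z"
    using arg_cong[OF e(1), of zv] arg_cong[OF e(2), of zv] arg_cong[OF e(3), of zv]
    by (simp_all add: zv_add zv_mul zv_dbl algebra_simps)
  show ?thesis unfolding p q R2_def scaleR_mat_mult
    using f by (simp add: mat3_mult ci_def sigma_eq vec_eq_iff forall_3 field_simps)
qed

lemma mat3_mm: "(vector [vector [a11,a12,a13], vector [a21,a22,a23], vector [a31,a32,a33]] :: real^3^3)
   ** (vector [vector [b11,b12,b13], vector [b21,b22,b23], vector [b31,b32,b33]] :: real^3^3)
   = vector [vector [a11*b11+a12*b21+a13*b31, a11*b12+a12*b22+a13*b32, a11*b13+a12*b23+a13*b33],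
             vector [a21*b11+a22*b21+a23*b31, a21*b12+a22*b22+a23*b32, a21*b13+a22*b23+a23*b33],
             vector [a31*b11+a32*b21+a33*b31, a31*b12+a32*b22+a33*b32, a31*b13+a32*b23+a33*b33]]"
  by (simp add: vec_eq_iff forall_3 matrix_matrix_mult_def sum_3)

lemma scaleR_mm: "((a::real) *\<^sub>R (M::real^3^3)) ** (b *\<^sub>R N) = (a*b) *\<^sub>R (M ** N)"
  by (simp add: vec_eq_iff matrix_matrix_mult_def sum_distrib_left algebra_simps)

lemma mat1_3: "(mat 1 :: real^3^3) = vector [vector [1,0,0], vector [0,1,0], vector [0,0,1]]"
  by (simp add: vec_eq_iff forall_3 mat_def)

lemma matrix_inv_invol:
  fixes A :: "real^3^3"
  assumes "A ** A = mat 1" shows "matrix_inv A = A"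
proof -
  have ex: "\<exists>A'. A ** A' = mat 1 \<and> A' ** A = mat 1" using assms by blast
  define B where "B = matrix_inv A"
  have B: "A ** B = mat 1 \<and> B ** A = mat 1"
    unfolding B_def matrix_inv_def by (rule someI_ex[OF ex])
  have "B = B ** (A ** A)" using assms by simp
  also have "\<dots> = (B ** A) ** A" by (simp add: matrix_mul_assoc)
  also have "\<dots> = A" using B by simp
  finally show ?thesis unfolding B_def .
qed

lemma R1_inv: "matrix_inv R1 = R1"
  by (rule matrix_inv_invol) (simp add: R1_def mat3_mm mat1_3)
lemma R3_inv: "matrix_inv R3 = R3"
  by (rule matrix_inv_invol) (simp add: R3_def mat3_mm mat1_3)
lemma R2_inv: "matrix_inv R2 = R2"
proof (rule matrix_inv_invol)
  have t: "tau * tau = tau + 1" by (rule tau_sq)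
  show "R2 ** R2 = mat 1"
    unfolding R2_def scaleR_mm mat3_mm mat1_3 sigma_eq
    by (simp add: vec_eq_iff forall_3 algebra_simps t)

qed

fun halfZ :: "zt \<Rightarrow> zt" where "halfZ (a,b) = (a div 2, b div 2)"
fun halfP :: "pt \<Rightarrow> pt" where "halfP (x,y,z) = (halfZ x, halfZ y, halfZ z)"

definition closL :: "pt list \<Rightarrow> bool" where
  "closL L = list_all (\<lambda>p. R1e p \<in> set L \<and> R3e p \<in> set L \<and>
      (let r = R2d p; q = halfP r in r = dblP q \<and> q \<in> set L)) L"

lemma gen_closed:
  assumes "closL L" "x \<in> interp ` set L" "g \<in> {R1,R2,R3}"
  shows "g *v x \<in> interp ` set L"
proof -
  obtain p where p: "p \<in> set L" "x = interp p" using assms(2) by auto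
  have c: "R1e p \<in> set L" "R3e p \<in> set L" "R2d p \<in> set (map dblP L)"
    using assms(1) p(1) unfolding closL_def list_all_iff Let_def by (auto simp del: R2d.simps halfP.simps dblP.simps)
  show ?thesis
  proof (cases "g = R1")
    case True then show ?thesis using c p by (simp add: R1_act)
  next
    case F1: False
    show ?thesis
    proof (cases "g = R3")
      case True then show ?thesis using c p by (simp add: R3_act)
    next
      case False
      then have "g = R2" using F1 assms(3) by auto
      moreover obtain q where "q \<in> set L" "R2d p = dblP q" using c(3) by auto
      ultimately show ?thesis using p R2_act by auto
    qed
  qed
qed

lemma orbit_sub:
  assumes "closL L" "p \<in> set L"
  shows "H3_orbit (interp p) \<subseteq> interp ` set L"
proof -
  have "A *v interp p \<in> interp ` set L" if "A \<in> H3" for A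
    using that
  proof (induction rule: H3.induct)
    case H3_id then show ?case using assms(2) by simp
  next
    case (H3_gen A g)
    then show ?case using gen_closed[OF assms(1)] by (simp add: matrix_vector_mul_assoc[symmetric])
  next
    case (H3_inv A g)
    then have "matrix_inv g = g" using R1_inv R2_inv R3_inv by auto
    then show ?case using H3_inv gen_closed[OF assms(1)] by (simp add: matrix_vector_mul_assoc[symmetric])
  qed
  then show ?thesis unfolding H3_orbit_def by auto
qed

lemma orbit_closed:
  assumes "v \<in> H3_orbit q" "g \<in> {R1,R2,R3}"
  shows "g *v v \<in> H3_orbit q"
proof -
  obtain A where "A \<in> H3" "v = A *v q" using assms(1) unfolding H3_orbit_def by auto
  then have "g ** A \<in> H3" "g *v v = (g ** A) *v q" using assms(2)
    by (simp_all add: H3.H3_gen matrix_vector_mul_assoc)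
  then show ?thesis unfolding H3_orbit_def by blast
qed

lemma orbit_self: "q \<in> H3_orbit q"
proof -
  have "mat 1 *v q = q" by simp
  then show ?thesis unfolding H3_orbit_def mem_Collect_eq using H3.H3_id by metis
qed

fun sgZ :: "bool \<Rightarrow> zt \<Rightarrow> zt" where "sgZ s a = (if s then a else negZ a)"

definition EPe :: "zt \<Rightarrow> zt \<Rightarrow> zt \<Rightarrow> pt list" where
  "EPe a b c = concat (map (\<lambda>(s1,s2,s3). [(sgZ s1 a, sgZ s2 b, sgZ s3 c), (sgZ s2 b, sgZ s3 c, sgZ s1 a), (sgZ s3 c, sgZ s1 a, sgZ s2 b)])
     [(s1,s2,s3). s1 \<leftarrow> [True,False], s2 \<leftarrow> [True,False], s3 \<leftarrow> [True,False]])"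

lemma ci_neg: "ci (negZ a) = - ci a" by (simp add: ci_def zv_neg)

lemma EP_enc: "EP (ci a) (ci b) (ci c) = interp ` set (EPe a b c)"
proof -
  have P: "{1,-1} \<times> {1,-1} \<times> {1,-1::real} = {(1,1,1),(1,1,-1),(1,-1,1),(1,-1,-1),(-1,1,1),(-1,1,-1),(-1,-1,1),(-1,-1,-1)}"
    by auto
  show ?thesis
    unfolding EP_def EPe_def P
    apply (simp add: ci_neg image_Un image_insert)
    apply (rule equalityI; simp only: insert_subset insert_iff empty_subsetI simp_thms)
    done
qed

lemma R2_sq: "R2 ** R2 = mat 1"
  unfolding R2_def scaleR_mm mat3_mm mat1_3 sigma_eq
  by (simp add: vec_eq_iff forall_3 algebra_simps tau_sq)

lemma sqrt5_bounds: "2.236 < sqrt 5" "sqrt 5 < 2.2362"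
proof -
  show "2.236 < sqrt 5" by (rule real_less_rsqrt) (simp add: power2_eq_square)
  have "sqrt 5 < sqrt (2.2362^2)" by (subst real_sqrt_less_iff) (simp add: power2_eq_square)
  then show "sqrt 5 < 2.2362" by simp
qed

lemma tau_bounds: "1.618 < tau" "tau < 1.6181"
  using sqrt5_bounds unfolding tau_def by simp_all

fun posZ :: "zt \<Rightarrow> bool" where
  "posZ (a,b) = (if b \<ge> 0 then 1000*a + 1618*b > 0 else 10000*a + 16181*b > 0)"

lemma posZ_sound: "posZ z \<Longrightarrow> zv z > 0"
proof (cases z)
  case (Pair a b)
  assume P: "posZ z"
  show ?thesis
  proof (cases "b \<ge> 0")
    case True
    then have "1000*a + 1618*b > 0" using P Pair by simp
    then have "real_of_int (1000*a + 1618*b) > 0" by linarith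
    then have h: "1000 * real_of_int a + 1618 * real_of_int b > 0" by simp
    have "real_of_int b * 1.618 \<le> real_of_int b * tau" using True tau_bounds(1) by (intro mult_left_mono) auto
    then show ?thesis using Pair h by simp
  next
    case False
    then have "10000*a + 16181*b > 0" using P Pair by simp
    then have "real_of_int (10000*a + 16181*b) > 0" by linarith
    then have h: "10000 * real_of_int a + 16181 * real_of_int b > 0" by simp
    have "real_of_int b * 1.6181 \<le> real_of_int b * tau" using False tau_bounds(2)
      by (intro mult_left_mono_neg) auto
    then show ?thesis using Pair h by simp
  qed
qed

fun subZ :: "zt \<Rightarrow> zt \<Rightarrow> zt" where "subZ (a,b) (c,d) = (a-c, b-d)"
lemma zv_sub: "zv (subZ p q) = zv p - zv q" by (cases p; cases q) (simp add: algebra_simps)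

fun phiZ :: "pt \<Rightarrow> zt" where "phiZ (x,y,z) = addZ (addZ x (mulZ (5,0) y)) z"
definition phi :: "pt \<Rightarrow> real" where "phi x = zv (phiZ x)"
definition impr :: "pt \<Rightarrow> pt \<Rightarrow> bool" where "impr x y = posZ (subZ (phiZ y) (phiZ x))"
lemma impr_sound: "impr x y \<Longrightarrow> phi x < phi y"
proof -
  assume "impr x y"
  then have "zv (subZ (phiZ y) (phiZ x)) > 0" unfolding impr_def by (rule posZ_sound)
  then show ?thesis unfolding phi_def zv_sub by simp
qed

definition chkL :: "(pt \<Rightarrow> bool) \<Rightarrow> pt \<Rightarrow> pt list \<Rightarrow> bool" where
  "chkL M p L = list_all (\<lambda>x. M (R1e x) \<and> M (R3e x) \<and> (let q = halfP (R2d x) in R2d x = dblP q \<and> M q)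
     \<and> (x = p \<or> impr x (R1e x) \<or> impr x (R3e x) \<or> impr x (halfP (R2d x)))) L"

lemma negZ_invol: "negZ (negZ a) = a" by (cases a) simp
lemma R1e_invol: "R1e (R1e x) = x" by (cases x) (simp add: negZ_invol)
lemma R3e_invol: "R3e (R3e x) = x" by (cases x) (simp add: negZ_invol)

lemma orbit_eq2:
  assumes Ms: "\<And>x. M x \<Longrightarrow> x \<in> set L" and Mp: "M p" and C: "chkL M p L"
  shows "H3_orbit (interp p) = interp ` set L"
proof
  have CL: "\<And>x. x \<in> set L \<Longrightarrow> M (R1e x) \<and> M (R3e x) \<and> R2d x = dblP (halfP (R2d x)) \<and> M (halfP (R2d x))
     \<and> (x = p \<or> impr x (R1e x) \<or> impr x (R3e x) \<or> impr x (halfP (R2d x)))"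
    using C unfolding chkL_def list_all_iff Let_def by blast
  have "closL L" unfolding closL_def list_all_iff Let_def
  proof
    fix x assume "x \<in> set L"
    from CL[OF this] show "R1e x \<in> set L \<and> R3e x \<in> set L \<and> R2d x = dblP (halfP (R2d x)) \<and> halfP (R2d x) \<in> set L"
      using Ms by blast
  qed
  then show "H3_orbit (interp p) \<subseteq> interp ` set L" using orbit_sub Ms Mp by blast
  have main: "\<And>x. x \<in> set L \<Longrightarrow> card {y \<in> set L. phi y > phi x} = n \<Longrightarrow> interp x \<in> H3_orbit (interp p)" for n
  proof (induction n rule: less_induct)
    case (less n x)
    note xL = less.prems(1)
    show ?case
    proof (cases "x = p")
      case True then show ?thesis using orbit_self by simp
    next
      case False
      have step: "interp x \<in> H3_orbit (interp p)"
        if yL: "y \<in> set L" and im: "impr x y" and gy: "interp x = g *v interp y" and g: "g \<in> {R1,R2,R3}" for y g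
      proof -
        have lt: "phi x < phi y" using impr_sound[OF im] .
        have sub: "{z \<in> set L. phi z > phi y} \<subset> {z \<in> set L. phi z > phi x}"
          using lt yL by auto
        have "card {z \<in> set L. phi z > phi y} < n"
          using psubset_card_mono[OF _ sub] less.prems(2) by simp
        then have "interp y \<in> H3_orbit (interp p)" using less.IH yL by blast
        then show ?thesis using gy orbit_closed g by simp
      qed
      have c: "M (R1e x)" "M (R3e x)" "R2d x = dblP (halfP (R2d x))" "M (halfP (R2d x))"
         "impr x (R1e x) \<or> impr x (R3e x) \<or> impr x (halfP (R2d x))"
        using CL[OF xL] False by auto
      show ?thesis
      proof -
        { assume "impr x (R1e x)"
          moreover have "interp x = R1 *v interp (R1e x)" by (simp add: R1_act R1e_invol)
          ultimately have ?thesis using step[of "R1e x" R1] Ms c(1) by simp }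
        moreover
        { assume "impr x (R3e x)"
          moreover have "interp x = R3 *v interp (R3e x)" by (simp add: R3_act R3e_invol)
          ultimately have ?thesis using step[of "R3e x" R3] Ms c(2) by simp }
        moreover
        { assume "impr x (halfP (R2d x))"
          moreover have "interp x = R2 *v interp (halfP (R2d x))"
          proof -
            have "R2 *v interp x = interp (halfP (R2d x))" by (rule R2_act[OF c(3)])
            then have "R2 *v interp (halfP (R2d x)) = (R2 ** R2) *v interp x"
              by (metis matrix_vector_mul_assoc)
            then show ?thesis by (simp add: R2_sq)
          qed
          ultimately have ?thesis using step[of "halfP (R2d x)" R2] Ms c(4) by simp }
        ultimately show ?thesis using c(5) by blast
      qed
    qed
  qed
  show "interp ` set L \<subseteq> H3_orbit (interp p)" using main by blast
qed

fun sm :: "zt \<Rightarrow> zt \<Rightarrow> bool" where "sm u a = (u = a \<or> u = negZ a)"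
fun epmem :: "zt \<Rightarrow> zt \<Rightarrow> zt \<Rightarrow> pt \<Rightarrow> bool" where
  "epmem a b c (y1,y2,y3) = ((sm y1 a \<and> sm y2 b \<and> sm y3 c) \<or> (sm y1 b \<and> sm y2 c \<and> sm y3 a) \<or> (sm y1 c \<and> sm y2 a \<and> sm y3 b))"

lemma EPe_mem: "(sgZ s1 a, sgZ s2 b, sgZ s3 c) \<in> set (EPe a b c) \<and> (sgZ s2 b, sgZ s3 c, sgZ s1 a) \<in> set (EPe a b c)
   \<and> (sgZ s3 c, sgZ s1 a, sgZ s2 b) \<in> set (EPe a b c)"
  unfolding EPe_def by (cases s1; cases s2; cases s3) (simp_all del: sgZ.simps add: sgZ.simps[of True] sgZ.simps[of False])

lemma sm_ex: "sm u a \<Longrightarrow> \<exists>s. u = sgZ s a"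
proof -
  assume "sm u a"
  then have "u = sgZ True a \<or> u = sgZ False a" by simp
  then show ?thesis by blast
qed

lemma epmem_sound: "epmem a b c y \<Longrightarrow> y \<in> set (EPe a b c)"
proof -
  obtain y1 y2 y3 where y: "y = (y1,y2,y3)" by (cases y) auto
  assume "epmem a b c y"
  then have "(sm y1 a \<and> sm y2 b \<and> sm y3 c) \<or> (sm y1 b \<and> sm y2 c \<and> sm y3 a) \<or> (sm y1 c \<and> sm y2 a \<and> sm y3 b)"
    using y by (simp only: epmem.simps)
  then show ?thesis
  proof (elim disjE conjE)
    assume "sm y1 a" "sm y2 b" "sm y3 c"
    then obtain s1 s2 s3 where "y1 = sgZ s1 a" "y2 = sgZ s2 b" "y3 = sgZ s3 c" using sm_ex by blast
    then show ?thesis using y EPe_mem[of s1 a s2 b s3 c] by (simp del: sgZ.simps)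
  next
    assume "sm y1 b" "sm y2 c" "sm y3 a"
    then obtain s1 s2 s3 where "y1 = sgZ s2 b" "y2 = sgZ s3 c" "y3 = sgZ s1 a" using sm_ex by blast
    then show ?thesis using y EPe_mem[of s1 a s2 b s3 c] by (simp del: sgZ.simps)
  next
    assume "sm y1 c" "sm y2 a" "sm y3 b"
    then obtain s1 s2 s3 where "y1 = sgZ s3 c" "y2 = sgZ s1 a" "y3 = sgZ s2 b" using sm_ex by blast
    then show ?thesis using y EPe_mem[of s1 a s2 b s3 c] by (simp del: sgZ.simps)
  qed
qed

fun fT :: "bool \<Rightarrow> zt \<Rightarrow> pt \<Rightarrow> pt" where
  "fT sw s (x,y,z) = (if sw then (mulZ s x, mulZ s z, mulZ s y) else (mulZ s x, mulZ s y, mulZ s z))"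

definition LofS :: "bool \<Rightarrow> zt \<Rightarrow> (zt \<times> zt \<times> zt) list \<Rightarrow> pt list" where
  "LofS sw s reps = map (fT sw s) (concat (map (\<lambda>(a,b,c). EPe a b c) reps))"
definition MofS :: "bool \<Rightarrow> zt \<Rightarrow> zt \<Rightarrow> (zt \<times> zt \<times> zt) list \<Rightarrow> pt \<Rightarrow> bool" where
  "MofS sw s si reps x = (let y = fT sw si x in fT sw s y = x \<and> list_ex (\<lambda>(a,b,c). epmem a b c y) reps)"

lemma MofS_sound: "MofS sw s si reps x \<Longrightarrow> x \<in> set (LofS sw s reps)"
proof -
  define F where "F = (\<lambda>r. case r of (a,b,c) \<Rightarrow> EPe a b c)"
  define y where "y = fT sw si x"
  assume "MofS sw s si reps x"
  then have h: "fT sw s y = x" "list_ex (\<lambda>(a,b,c). epmem a b c y) reps"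
    unfolding MofS_def Let_def y_def by simp_all
  from h(2) obtain r where r: "r \<in> set reps" "(\<lambda>(a,b,c). epmem a b c y) r"
    unfolding list_ex_iff by blast
  obtain a b c where abc: "r = (a,b,c)" by (cases r) auto
  have "y \<in> set (F r)" using r(2) abc epmem_sound unfolding F_def by simp
  then have "y \<in> set (concat (map F reps))" using r(1) by auto
  then have "fT sw s y \<in> set (map (fT sw s) (concat (map F reps)))" by simp
  then show ?thesis unfolding LofS_def F_def using h(1) by simp
qed

lemma exhaust_6:
  fixes x :: 6
  shows "x = 1 \<or> x = 2 \<or> x = 3 \<or> x = 4 \<or> x = 5 \<or> x = 6"
proof (induct x)
  case (of_int z)
  then have "z = 0 \<or> z = 1 \<or> z = 2 \<or> z = 3 \<or> z = 4 \<or> z = 5" by fastforce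
  then show ?case by auto
qed

lemma forall_6: "(\<forall>i::6. P i) \<longleftrightarrow> P 1 \<and> P 2 \<and> P 3 \<and> P 4 \<and> P 5 \<and> P 6"
  by (metis exhaust_6)

lemma UNIV_6: "UNIV = {1, 2, 3, 4, 5, 6::6}"
  using exhaust_6 by auto

lemma sum_6: "sum f (UNIV::6 set) = f 1 + f 2 + f 3 + f 4 + f 5 + f 6"
  unfolding UNIV_6 by (simp add: ac_simps)

lemma l_comp: "l i $ j = (if j = i then 1 else 0)"
  unfolding l_def axis_def by simp

definition K :: real where "K = 1 / sqrt (2 * (2 + tau))"

lemma Kc: "sqrt (2 / (2 + tau)) = 2 * K"
proof -
  have t: "2 + tau > 0" using tau_pos by simp
  have "sqrt (2 / (2 + tau)) = sqrt 2 / sqrt (2 + tau)" by (simp add: real_sqrt_divide)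
  also have "\<dots> = 2 / (sqrt 2 * sqrt (2 + tau))"
    using t by (simp add: field_simps)
  also have "\<dots> = 2 * K" unfolding K_def real_sqrt_mult by simp
  finally show ?thesis .
qed

lemma pi_par_comp: "pi_par x = K *\<^sub>R vector [x$1 - x$2 + tau * x$5 - tau * x$6,
   tau * x$1 + tau * x$2 + x$3 + x$4, tau * x$3 - tau * x$4 + x$5 + x$6]"
  unfolding pi_par_def K_def[symmetric] by (simp add: vec_eq_iff forall_3 algebra_simps)

lemma D6I: "(\<And>i. x $ i \<in> \<int>) \<Longrightarrow> (\<Sum>i\<in>UNIV. x $ i) = 2 * of_int k \<Longrightarrow> x \<in> D6"
  unfolding D6_def by blast

lemma case1_a:
  fixes m1 m2 :: int
  assumes "even (m1 + m2)"
  defines "lam \<equiv> of_int m1 *\<^sub>R l 1 + of_int m2 *\<^sub>R (l 2 + l 3 + l 4 + l 5 - l 6)"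
  shows "lam \<in> D6 \<and> pi_par lam = (sqrt (2 / (2 + tau)) * (of_int m1 - of_int m2 + 2 * of_int m2 * tau) / 2) *\<^sub>R vector [1, tau, 0]"
proof -
  obtain t where t: "m1 + m2 = 2 * t" using evenE[OF assms(1)] by metis
  have c: "lam $ 1 = of_int m1" "lam $ 2 = of_int m2" "lam $ 3 = of_int m2" "lam $ 4 = of_int m2"
     "lam $ 5 = of_int m2" "lam $ 6 = - of_int m2"
    unfolding lam_def by (simp_all add: l_comp)
  have "lam \<in> D6"
  proof (rule D6I[where k = "t + m2"])
    fix i show "lam $ i \<in> \<int>" using exhaust_6[of i] c by auto
    show "(\<Sum>i\<in>UNIV. lam $ i) = 2 * of_int (t + m2)"
      unfolding sum_6 c using arg_cong[OF t, of real_of_int] by simp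
  qed
  moreover have "pi_par lam = (sqrt (2 / (2 + tau)) * (of_int m1 - of_int m2 + 2 * of_int m2 * tau) / 2) *\<^sub>R vector [1, tau, 0]"
    unfolding pi_par_comp c Kc
    apply (simp add: vec_eq_iff forall_3 algebra_simps)
    using tau_sq by algebra
  ultimately show ?thesis by simp
qed

definition Pm :: "bool \<Rightarrow> real^3^3" where
  "Pm sw = (if sw then vector [vector [1,0,0], vector [0,0,1], vector [0,1,0]] else mat 1)"

lemma interp_fT: "interp (fT sw s x) = zv s *\<^sub>R (Pm sw *v interp x)"
proof -
  obtain a b c where x: "x = (a,b,c)" by (cases x) auto
  show ?thesis
    by (cases sw) (simp_all add: x Pm_def mat3_mult mat1_3 ci_def zv_mul vec_eq_iff forall_3)
qed

lemma Pm_orth: "orthogonal_matrix (Pm sw)"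
proof (cases sw)
  case True
  let ?P = "vector [vector [1,0,0], vector [0,0,1], vector [0,1,0]] :: real^3^3"
  have t: "transpose ?P = ?P" by (simp add: vec_eq_iff forall_3 transpose_def)
  have "transpose ?P ** ?P = mat 1" unfolding t mat3_mm mat1_3 by simp
  then show ?thesis using True unfolding Pm_def orthogonal_matrix by simp
next
  case False then show ?thesis by (simp add: Pm_def orthogonal_matrix_id)
qed

lemma mat_e_orth: "e * e = 1 \<Longrightarrow> orthogonal_matrix (mat e :: real^3^3)"
  unfolding orthogonal_matrix transpose_mat by (simp add: mat1_3 vec_eq_iff forall_3 matrix_matrix_mult_def sum_3 mat_def)

lemma mat_e_mult: "(mat e :: real^3^3) *v v = e *\<^sub>R v"
  by (simp add: vec_eq_iff forall_3 matrix_vector_mult_def sum_3 mat_def)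

lemma orbit_scale: "H3_orbit (k *\<^sub>R q) = (\<lambda>x. k *\<^sub>R x) ` H3_orbit q"
  unfolding H3_orbit_def by (auto simp: matrix_vector_mult_scaleR)

lemma sim_final:
  assumes O: "H3_orbit q = interp ` set (LofS sw s reps)"
    and T: "T = interp ` set (concat (map (\<lambda>(a,b,c). EPe a b c) reps))"
    and k: "k \<noteq> 0" and s: "zv s \<noteq> 0"
  shows "similar_to (H3_orbit (k *\<^sub>R q)) T"
proof -
  define e where "e = sgn (k * zv s)"
  define r where "r = \<bar>k * zv s\<bar>"
  define Q where "Q = mat e ** Pm sw"
  have e2: "e * e = 1" using k s unfolding e_def by (simp add: sgn_if)
  have r0: "r > 0" using k s unfolding r_def by simp
  have re: "r * e = k * zv s" unfolding r_def e_def by (simp add: abs_mult_sgn)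
  have Q: "orthogonal_matrix Q" unfolding Q_def by (rule orthogonal_matrix_mul[OF mat_e_orth[OF e2] Pm_orth])
  have f: "\<And>x. k *\<^sub>R interp (fT sw s x) = r *\<^sub>R (Q *v interp x) + 0"
    unfolding Q_def interp_fT by (simp add: matrix_vector_mul_assoc[symmetric] mat_e_mult re)
  have "H3_orbit (k *\<^sub>R q) = (\<lambda>x. k *\<^sub>R x) ` interp ` fT sw s ` set (concat (map (\<lambda>(a,b,c). EPe a b c) reps))"
    unfolding orbit_scale O LofS_def by (simp add: image_image)
  also have "\<dots> = (\<lambda>x. r *\<^sub>R (Q *v x) + 0) ` T"
    unfolding T image_image f by simp
  finally show ?thesis unfolding similar_to_def using r0 Q by blast
qed

lemma tau2: "tau^2 = tau + 1" using tau_sq by (simp add: power2_eq_square)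
lemma tau3: "tau^3 = 2*tau + 1"
proof -
  have "tau^3 = tau * (tau * tau)" by (simp add: power3_eq_cube)
  also have "\<dots> = 2*tau + 1" using tau_sq by (simp add: algebra_simps)
  finally show ?thesis .
qed
lemma inv_tau: "1/tau = tau - 1"
proof -
  have "tau \<noteq> 0" using tau_pos by simp
  then show ?thesis using tau_sq by (simp add: field_simps)
qed
lemma two_div_tau: "2/tau = 2*tau - 2"
proof -
  have "2/tau = 2 * (1/tau)" by simp
  then show ?thesis using inv_tau by simp
qed

lemma EPs: "EP a b c \<union> EP a' b' c' = EP a b c \<union> (EP a' b' c' \<union> {})" by simp

lemma reps_img: "interp ` set (concat (map (\<lambda>(a,b,c). EPe a b c) ((a,b,c) # rs))) = EP (ci a) (ci b) (ci c) \<union> interp ` set (concat (map (\<lambda>(a,b,c). EPe a b c) rs))"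
  by (simp add: EP_enc image_Un)
lemma reps_nil: "interp ` set (concat (map (\<lambda>(a,b,c). EPe a b c) [])) = {}" by simp

lemma five_dvd_sq: "(5::int) dvd a^2 \<Longrightarrow> 5 dvd a"
proof -
  assume h: "(5::int) dvd a^2"
  have m: "a^2 mod 5 = ((a mod 5)^2) mod 5" by (simp add: power_mod)
  have "a mod 5 \<in> {0,1,2,3,4}" by auto
  moreover have "a^2 mod 5 = 0" using h by simp
  ultimately have "a mod 5 = 0" using m by auto
  then show ?thesis by auto
qed

lemma sqrt5_desc: "a^2 = 5 * b^2 \<Longrightarrow> (b::int) = 0"
proof (induction "nat \<bar>b\<bar>" arbitrary: a b rule: less_induct)
  case less
  show ?case
  proof (rule ccontr)
    assume b0: "b \<noteq> 0"
    have "(5::int) dvd a^2" using less.prems by simp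
    then have "(5::int) dvd a" by (rule five_dvd_sq)
    then obtain k where k: "a = 5 * k" by (rule dvdE)
    have bk: "b^2 = 5 * k^2" using less.prems k by (simp add: power_mult_distrib)
    have "b^2 > 0" using b0 by simp
    then have "k^2 < b^2" using bk by linarith
    then have "\<bar>k\<bar>^2 < \<bar>b\<bar>^2" by simp
    then have "\<bar>k\<bar> < \<bar>b\<bar>" by (rule power_less_imp_less_base) simp
    then have "nat \<bar>k\<bar> < nat \<bar>b\<bar>" by simp
    then have "k = 0" using less.hyps bk by blast
    then show False using bk b0 by simp
  qed
qed

lemma X_nz:
  fixes m1 m2 :: int
  assumes "(m1, m2) \<noteq> (0, 0)"
  shows "of_int m1 - of_int m2 + 2 * of_int m2 * tau \<noteq> 0"
proof
  assume h: "of_int m1 - of_int m2 + 2 * of_int m2 * tau = 0"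
  have "of_int m1 - of_int m2 + 2 * of_int m2 * tau = of_int m1 + of_int m2 * sqrt 5"
    unfolding tau_def by (simp add: algebra_simps)
  then have e: "of_int m1 = - of_int m2 * sqrt 5" using h by simp
  then have "(of_int m1)^2 = (of_int m2)^2 * (sqrt 5)^2" by (simp add: power_mult_distrib)
  then have "real_of_int (m1^2) = real_of_int (5 * m2^2)" by simp
  then have "m1^2 = 5 * m2^2" by (simp only: of_int_eq_iff)
  then have "m2 = 0" by (rule sqrt5_desc)
  then have "m1 = 0" using e by simp
  then show False using assms \<open>m2 = 0\<close> by simp
qed

lemma c_nz:
  fixes m1 m2 :: int
  assumes "(m1, m2) \<noteq> (0, 0)"
  shows "sqrt (2 / (2 + tau)) * (of_int m1 - of_int m2 + 2 * of_int m2 * tau) \<noteq> 0"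
  using X_nz[OF assms] tau_pos by simp

lemma orbit_eqS:
  assumes "MofS sw s si reps p" "chkL (MofS sw s si reps) p (LofS sw s reps)"
  shows "H3_orbit (interp p) = interp ` set (LofS sw s reps)"
  by (rule orbit_eq2[OF MofS_sound assms])

lemma case1:
  fixes m1 m2 :: int
  assumes ev: "even (m1 + m2)" and nz: "(m1, m2) \<noteq> (0, 0)"
  shows "(let lam = of_int m1 *\<^sub>R l 1 + of_int m2 *\<^sub>R (l 2 + l 3 + l 4 + l 5 - l 6)
     in lam \<in> D6 \<and> pi_par lam = (sqrt (2 / (2 + tau)) * (of_int m1 - of_int m2 + 2 * of_int m2 * tau) / 2) *\<^sub>R vector [1, tau, 0]
        \<and> similar_to (H3_orbit (pi_par lam)) std_icosahedron)"
proof -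
  obtain t where t: "m1 + m2 = 2 * t" using evenE[OF ev] by metis
  have m1r: "real_of_int m1 = 2 * of_int t - of_int m2" using arg_cong[OF t, of real_of_int] by simp
  define lam where "lam = of_int m1 *\<^sub>R l 1 + of_int m2 *\<^sub>R (l 2 + l 3 + l 4 + l 5 - l 6)"
  have c: "lam $ 1 = of_int (2*t - m2)"
     "lam $ 2 = of_int (m2)"
     "lam $ 3 = of_int (m2)"
     "lam $ 4 = of_int (m2)"
     "lam $ 5 = of_int (m2)"
     "lam $ 6 = of_int (- m2)"
    unfolding lam_def by (simp_all add: l_comp m1r algebra_simps)
  have D: "lam \<in> D6"
  proof (rule D6I[where k = "t + m2"])
    fix i show "lam $ i \<in> \<int>" using exhaust_6[of i] c by auto
    show "(\<Sum>i\<in>UNIV. lam $ i) = 2 * of_int (t + m2)" unfolding sum_6 c by (simp add: algebra_simps)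
  qed
  have P: "pi_par lam = (sqrt (2 / (2 + tau)) * (of_int m1 - of_int m2 + 2 * of_int m2 * tau) / 2) *\<^sub>R vector [1, tau, 0]"
    unfolding pi_par_comp c Kc m1r
    apply (simp add: vec_eq_iff forall_3 algebra_simps)
    using tau_sq by algebra
  have V: "vector [1, tau, 0] = interp ((2,0),(0,2),(0,0))"
    by (simp add: ci_def vec_eq_iff forall_3 tau2 algebra_simps)
  have O: "H3_orbit (interp ((2,0),(0,2),(0,0))) = interp ` set (LofS False (1,0) [((0,0),(2,0),(0,2))])"
    by (rule orbit_eqS[where si = "(1,0)"]; code_simp)
  have args: "ci (0,0) = 0"
    "ci (2,0) = 1"
    "ci (0,2) = tau"
    by (simp_all add: ci_def inv_tau two_div_tau tau2 tau3 field_simps)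
  have T: "std_icosahedron = interp ` set (concat (map (\<lambda>(a,b,c). EPe a b c) [((0,0),(2,0),(0,2))]))"
    unfolding std_icosahedron_def reps_img reps_nil args Un_empty_right Un_assoc ..
  have S: "similar_to (H3_orbit (pi_par lam)) std_icosahedron"
    unfolding P V by (rule sim_final[OF O T]) (use c_nz[OF nz] in simp, simp)
  show ?thesis using D P S unfolding lam_def Let_def by blast
qed

lemma case2:
  fixes m1 m2 :: int
  assumes ev: "even (m1 + m2)" and nz: "(m1, m2) \<noteq> (0, 0)"
  shows "(let lam = (1/2) *\<^sub>R (of_int (m1 + 3*m2) *\<^sub>R (l 1 + l 2 + l 3) + of_int (m1 - m2) *\<^sub>R (l 4 + l 5 + l 6))
     in lam \<in> D6 \<and> pi_par lam = (sqrt (2 / (2 + tau)) * (of_int m1 - of_int m2 + 2 * of_int m2 * tau) / 2) *\<^sub>R vector [0, tau^2, 1]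
        \<and> similar_to (H3_orbit (pi_par lam)) std_dodecahedron)"
proof -
  obtain t where t: "m1 + m2 = 2 * t" using evenE[OF ev] by metis
  have m1r: "real_of_int m1 = 2 * of_int t - of_int m2" using arg_cong[OF t, of real_of_int] by simp
  define lam where "lam = (1/2) *\<^sub>R (of_int (m1 + 3*m2) *\<^sub>R (l 1 + l 2 + l 3) + of_int (m1 - m2) *\<^sub>R (l 4 + l 5 + l 6))"
  have c: "lam $ 1 = of_int (t + m2)"
     "lam $ 2 = of_int (t + m2)"
     "lam $ 3 = of_int (t + m2)"
     "lam $ 4 = of_int (t - m2)"
     "lam $ 5 = of_int (t - m2)"
     "lam $ 6 = of_int (t - m2)"
    unfolding lam_def by (simp_all add: l_comp m1r algebra_simps)
  have D: "lam \<in> D6"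
  proof (rule D6I[where k = "3*t"])
    fix i show "lam $ i \<in> \<int>" using exhaust_6[of i] c by auto
    show "(\<Sum>i\<in>UNIV. lam $ i) = 2 * of_int (3*t)" unfolding sum_6 c by (simp add: algebra_simps)
  qed
  have P: "pi_par lam = (sqrt (2 / (2 + tau)) * (of_int m1 - of_int m2 + 2 * of_int m2 * tau) / 2) *\<^sub>R vector [0, tau^2, 1]"
    unfolding pi_par_comp c Kc m1r
    apply (simp add: vec_eq_iff forall_3 algebra_simps)
    using tau_sq by algebra
  have V: "vector [0, tau^2, 1] = interp ((0,0),(2,2),(2,0))"
    by (simp add: ci_def vec_eq_iff forall_3 tau2 algebra_simps)
  have O: "H3_orbit (interp ((0,0),(2,2),(2,0))) = interp ` set (LofS True (0,1) [((2,0),(2,0),(2,0)),((0,0),(-2,2),(0,2))])"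
    by (rule orbit_eqS[where si = "(-1,1)"]; code_simp)
  have args: "ci (0,0) = 0"
    "ci (2,0) = 1"
    "ci (0,2) = tau"
    "ci (-2,2) = 1/tau"
    by (simp_all add: ci_def inv_tau two_div_tau tau2 tau3 field_simps)
  have T: "std_dodecahedron = interp ` set (concat (map (\<lambda>(a,b,c). EPe a b c) [((2,0),(2,0),(2,0)),((0,0),(-2,2),(0,2))]))"
    unfolding std_dodecahedron_def reps_img reps_nil args Un_empty_right Un_assoc ..
  have S: "similar_to (H3_orbit (pi_par lam)) std_dodecahedron"
    unfolding P V by (rule sim_final[OF O T]) (use c_nz[OF nz] in simp, use tau_pos in simp)
  show ?thesis using D P S unfolding lam_def Let_def by blast
qed

lemma case3:
  fixes m1 m2 :: int
  assumes ev: "even (m1 + m2)" and nz: "(m1, m2) \<noteq> (0, 0)"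
  shows "(let lam = of_int (m1 + m2) *\<^sub>R (l 1 + l 2) + of_int (2*m2) *\<^sub>R (l 3 + l 4)
     in lam \<in> D6 \<and> pi_par lam = (sqrt (2 / (2 + tau)) * (of_int m1 - of_int m2 + 2 * of_int m2 * tau)) *\<^sub>R vector [0, tau, 0]
        \<and> similar_to (H3_orbit (pi_par lam)) std_icosidodecahedron)"
proof -
  obtain t where t: "m1 + m2 = 2 * t" using evenE[OF ev] by metis
  have m1r: "real_of_int m1 = 2 * of_int t - of_int m2" using arg_cong[OF t, of real_of_int] by simp
  define lam where "lam = of_int (m1 + m2) *\<^sub>R (l 1 + l 2) + of_int (2*m2) *\<^sub>R (l 3 + l 4)"
  have c: "lam $ 1 = of_int (2*t)"
     "lam $ 2 = of_int (2*t)"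
     "lam $ 3 = of_int (2*m2)"
     "lam $ 4 = of_int (2*m2)"
     "lam $ 5 = of_int (0)"
     "lam $ 6 = of_int (0)"
    unfolding lam_def by (simp_all add: l_comp m1r algebra_simps)
  have D: "lam \<in> D6"
  proof (rule D6I[where k = "2*t + 2*m2"])
    fix i show "lam $ i \<in> \<int>" using exhaust_6[of i] c by auto
    show "(\<Sum>i\<in>UNIV. lam $ i) = 2 * of_int (2*t + 2*m2)" unfolding sum_6 c by (simp add: algebra_simps)
  qed
  have P: "pi_par lam = (sqrt (2 / (2 + tau)) * (of_int m1 - of_int m2 + 2 * of_int m2 * tau)) *\<^sub>R vector [0, tau, 0]"
    unfolding pi_par_comp c Kc m1r
    apply (simp add: vec_eq_iff forall_3 algebra_simps)
    using tau_sq by algebra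
  have V: "vector [0, tau, 0] = interp ((0,0),(0,2),(0,0))"
    by (simp add: ci_def vec_eq_iff forall_3 tau2 algebra_simps)
  have O: "H3_orbit (interp ((0,0),(0,2),(0,0))) = interp ` set (LofS True (1,0) [((0,0),(0,0),(0,2)),((1,0),(0,1),(1,1))])"
    by (rule orbit_eqS[where si = "(1,0)"]; code_simp)
  have args: "ci (0,0) = 0"
    "ci (0,2) = tau"
    "ci (1,0) = 1/2"
    "ci (0,1) = tau/2"
    "ci (1,1) = tau^2/2"
    by (simp_all add: ci_def inv_tau two_div_tau tau2 tau3 field_simps)
  have T: "std_icosidodecahedron = interp ` set (concat (map (\<lambda>(a,b,c). EPe a b c) [((0,0),(0,0),(0,2)),((1,0),(0,1),(1,1))]))"
    unfolding std_icosidodecahedron_def reps_img reps_nil args Un_empty_right Un_assoc ..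
  have S: "similar_to (H3_orbit (pi_par lam)) std_icosidodecahedron"
    unfolding P V by (rule sim_final[OF O T]) (use c_nz[OF nz] in simp, simp)
  show ?thesis using D P S unfolding lam_def Let_def by blast
qed

lemma case4:
  fixes m1 m2 :: int
  assumes ev: "even (m1 + m2)" and nz: "(m1, m2) \<noteq> (0, 0)"
  shows "(let lam = of_int (2*m1 + m2) *\<^sub>R l 1 + of_int (m1 + 2*m2) *\<^sub>R l 2
               + of_int m2 *\<^sub>R (3 *\<^sub>R l 3 + 3 *\<^sub>R l 4 + l 5 - l 6)
     in lam \<in> D6 \<and> pi_par lam = (sqrt (2 / (2 + tau)) * (of_int m1 - of_int m2 + 2 * of_int m2 * tau) / 2) *\<^sub>R vector [1, 3*tau, 0]
        \<and> similar_to (H3_orbit (pi_par lam)) std_truncated_icosahedron)"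
proof -
  obtain t where t: "m1 + m2 = 2 * t" using evenE[OF ev] by metis
  have m1r: "real_of_int m1 = 2 * of_int t - of_int m2" using arg_cong[OF t, of real_of_int] by simp
  define lam where "lam = of_int (2*m1 + m2) *\<^sub>R l 1 + of_int (m1 + 2*m2) *\<^sub>R l 2
               + of_int m2 *\<^sub>R (3 *\<^sub>R l 3 + 3 *\<^sub>R l 4 + l 5 - l 6)"
  have c: "lam $ 1 = of_int (4*t - m2)"
     "lam $ 2 = of_int (2*t + m2)"
     "lam $ 3 = of_int (3*m2)"
     "lam $ 4 = of_int (3*m2)"
     "lam $ 5 = of_int (m2)"
     "lam $ 6 = of_int (- m2)"
    unfolding lam_def by (simp_all add: l_comp m1r algebra_simps)
  have D: "lam \<in> D6"
  proof (rule D6I[where k = "3*t + 3*m2"])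
    fix i show "lam $ i \<in> \<int>" using exhaust_6[of i] c by auto
    show "(\<Sum>i\<in>UNIV. lam $ i) = 2 * of_int (3*t + 3*m2)" unfolding sum_6 c by (simp add: algebra_simps)
  qed
  have P: "pi_par lam = (sqrt (2 / (2 + tau)) * (of_int m1 - of_int m2 + 2 * of_int m2 * tau) / 2) *\<^sub>R vector [1, 3*tau, 0]"
    unfolding pi_par_comp c Kc m1r
    apply (simp add: vec_eq_iff forall_3 algebra_simps)
    using tau_sq by algebra
  have V: "vector [1, 3*tau, 0] = interp ((2,0),(0,6),(0,0))"
    by (simp add: ci_def vec_eq_iff forall_3 tau2 algebra_simps)
  have O: "H3_orbit (interp ((2,0),(0,6),(0,0))) = interp ` set (LofS False (1,0) [((0,0),(2,0),(0,6)),((2,0),(4,2),(0,4)),((0,2),(4,0),(2,4))])"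
    by (rule orbit_eqS[where si = "(1,0)"]; code_simp)
  have args: "ci (0,0) = 0"
    "ci (2,0) = 1"
    "ci (0,6) = 3*tau"
    "ci (4,2) = 2+tau"
    "ci (0,4) = 2*tau"
    "ci (0,2) = tau"
    "ci (4,0) = 2"
    "ci (2,4) = tau^3"
    by (simp_all add: ci_def inv_tau two_div_tau tau2 tau3 field_simps)
  have T: "std_truncated_icosahedron = interp ` set (concat (map (\<lambda>(a,b,c). EPe a b c) [((0,0),(2,0),(0,6)),((2,0),(4,2),(0,4)),((0,2),(4,0),(2,4))]))"
    unfolding std_truncated_icosahedron_def reps_img reps_nil args Un_empty_right Un_assoc ..
  have S: "similar_to (H3_orbit (pi_par lam)) std_truncated_icosahedron"
    unfolding P V by (rule sim_final[OF O T]) (use c_nz[OF nz] in simp, simp)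
  show ?thesis using D P S unfolding lam_def Let_def by blast
qed

lemma case5:
  fixes m1 m2 :: int
  assumes ev: "even (m1 + m2)" and nz: "(m1, m2) \<noteq> (0, 0)"
  shows "(let lam = (1/2) *\<^sub>R (of_int (3*(m1 + m2)) *\<^sub>R l 1 + of_int (m1 + 5*m2) *\<^sub>R (l 2 + l 3)
               + of_int (m1 + m2) *\<^sub>R (l 4 + l 5) + of_int (m1 - 3*m2) *\<^sub>R l 6)
     in lam \<in> D6 \<and> pi_par lam = (sqrt (2 / (2 + tau)) * (of_int m1 - of_int m2 + 2 * of_int m2 * tau) / 2) *\<^sub>R vector [1, 2*tau + 1, 1]
        \<and> similar_to (H3_orbit (pi_par lam)) std_small_rhombicosidodecahedron)"
proof -
  obtain t where t: "m1 + m2 = 2 * t" using evenE[OF ev] by metis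
  have m1r: "real_of_int m1 = 2 * of_int t - of_int m2" using arg_cong[OF t, of real_of_int] by simp
  define lam where "lam = (1/2) *\<^sub>R (of_int (3*(m1 + m2)) *\<^sub>R l 1 + of_int (m1 + 5*m2) *\<^sub>R (l 2 + l 3)
               + of_int (m1 + m2) *\<^sub>R (l 4 + l 5) + of_int (m1 - 3*m2) *\<^sub>R l 6)"
  have c: "lam $ 1 = of_int (3*t)"
     "lam $ 2 = of_int (t + 2*m2)"
     "lam $ 3 = of_int (t + 2*m2)"
     "lam $ 4 = of_int (t)"
     "lam $ 5 = of_int (t)"
     "lam $ 6 = of_int (t - 2*m2)"
    unfolding lam_def by (simp_all add: l_comp m1r algebra_simps)
  have D: "lam \<in> D6"
  proof (rule D6I[where k = "4*t + m2"])
    fix i show "lam $ i \<in> \<int>" using exhaust_6[of i] c by auto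
    show "(\<Sum>i\<in>UNIV. lam $ i) = 2 * of_int (4*t + m2)" unfolding sum_6 c by (simp add: algebra_simps)
  qed
  have P: "pi_par lam = (sqrt (2 / (2 + tau)) * (of_int m1 - of_int m2 + 2 * of_int m2 * tau) / 2) *\<^sub>R vector [1, 2*tau + 1, 1]"
    unfolding pi_par_comp c Kc m1r
    apply (simp add: vec_eq_iff forall_3 algebra_simps)
    using tau_sq by algebra
  have V: "vector [1, 2*tau + 1, 1] = interp ((2,0),(2,4),(2,0))"
    by (simp add: ci_def vec_eq_iff forall_3 tau2 algebra_simps)
  have O: "H3_orbit (interp ((2,0),(2,4),(2,0))) = interp ` set (LofS True (1,0) [((2,0),(2,0),(2,4)),((2,2),(0,2),(0,4)),((4,2),(0,0),(2,2))])"
    by (rule orbit_eqS[where si = "(1,0)"]; code_simp)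
  have args: "ci (0,0) = 0"
    "ci (2,0) = 1"
    "ci (2,4) = tau^3"
    "ci (2,2) = tau^2"
    "ci (0,2) = tau"
    "ci (0,4) = 2*tau"
    "ci (4,2) = 2+tau"
    by (simp_all add: ci_def inv_tau two_div_tau tau2 tau3 field_simps)
  have T: "std_small_rhombicosidodecahedron = interp ` set (concat (map (\<lambda>(a,b,c). EPe a b c) [((2,0),(2,0),(2,4)),((2,2),(0,2),(0,4)),((4,2),(0,0),(2,2))]))"
    unfolding std_small_rhombicosidodecahedron_def reps_img reps_nil args Un_empty_right Un_assoc ..
  have S: "similar_to (H3_orbit (pi_par lam)) std_small_rhombicosidodecahedron"
    unfolding P V by (rule sim_final[OF O T]) (use c_nz[OF nz] in simp, simp)
  show ?thesis using D P S unfolding lam_def Let_def by blast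
qed

lemma case6:
  fixes m1 m2 :: int
  assumes ev: "even (m1 + m2)" and nz: "(m1, m2) \<noteq> (0, 0)"
  shows "(let lam = (1/2) *\<^sub>R (of_int (3*m1 + 5*m2) *\<^sub>R (l 1 + l 2) + of_int (m1 + 7*m2) *\<^sub>R l 3
               + of_int (m1 + 3*m2) *\<^sub>R l 4 + of_int (m1 - m2) *\<^sub>R (l 5 + l 6))
     in lam \<in> D6 \<and> pi_par lam = (sqrt (2 / (2 + tau)) * (of_int m1 - of_int m2 + 2 * of_int m2 * tau) / 2) *\<^sub>R vector [0, 3*tau + 1, 1]
        \<and> similar_to (H3_orbit (pi_par lam)) std_truncated_dodecahedron)"
proof -
  obtain t where t: "m1 + m2 = 2 * t" using evenE[OF ev] by metis
  have m1r: "real_of_int m1 = 2 * of_int t - of_int m2" using arg_cong[OF t, of real_of_int] by simp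
  define lam where "lam = (1/2) *\<^sub>R (of_int (3*m1 + 5*m2) *\<^sub>R (l 1 + l 2) + of_int (m1 + 7*m2) *\<^sub>R l 3
               + of_int (m1 + 3*m2) *\<^sub>R l 4 + of_int (m1 - m2) *\<^sub>R (l 5 + l 6))"
  have c: "lam $ 1 = of_int (3*t + m2)"
     "lam $ 2 = of_int (3*t + m2)"
     "lam $ 3 = of_int (t + 3*m2)"
     "lam $ 4 = of_int (t + m2)"
     "lam $ 5 = of_int (t - m2)"
     "lam $ 6 = of_int (t - m2)"
    unfolding lam_def by (simp_all add: l_comp m1r algebra_simps)
  have D: "lam \<in> D6"
  proof (rule D6I[where k = "5*t + 2*m2"])
    fix i show "lam $ i \<in> \<int>" using exhaust_6[of i] c by auto
    show "(\<Sum>i\<in>UNIV. lam $ i) = 2 * of_int (5*t + 2*m2)" unfolding sum_6 c by (simp add: algebra_simps)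
  qed
  have P: "pi_par lam = (sqrt (2 / (2 + tau)) * (of_int m1 - of_int m2 + 2 * of_int m2 * tau) / 2) *\<^sub>R vector [0, 3*tau + 1, 1]"
    unfolding pi_par_comp c Kc m1r
    apply (simp add: vec_eq_iff forall_3 algebra_simps)
    using tau_sq by algebra
  have V: "vector [0, 3*tau + 1, 1] = interp ((0,0),(2,6),(2,0))"
    by (simp add: ci_def vec_eq_iff forall_3 tau2 algebra_simps)
  have O: "H3_orbit (interp ((0,0),(2,6),(2,0))) = interp ` set (LofS True (0,1) [((0,0),(-2,2),(4,2)),((-2,2),(0,2),(0,4)),((0,2),(4,0),(2,2))])"
    by (rule orbit_eqS[where si = "(-1,1)"]; code_simp)
  have args: "ci (0,0) = 0"
    "ci (-2,2) = 1/tau"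
    "ci (4,2) = 2+tau"
    "ci (0,2) = tau"
    "ci (0,4) = 2*tau"
    "ci (4,0) = 2"
    "ci (2,2) = tau+1"
    by (simp_all add: ci_def inv_tau two_div_tau tau2 tau3 field_simps)
  have T: "std_truncated_dodecahedron = interp ` set (concat (map (\<lambda>(a,b,c). EPe a b c) [((0,0),(-2,2),(4,2)),((-2,2),(0,2),(0,4)),((0,2),(4,0),(2,2))]))"
    unfolding std_truncated_dodecahedron_def reps_img reps_nil args Un_empty_right Un_assoc ..
  have S: "similar_to (H3_orbit (pi_par lam)) std_truncated_dodecahedron"
    unfolding P V by (rule sim_final[OF O T]) (use c_nz[OF nz] in simp, use tau_pos in simp)
  show ?thesis using D P S unfolding lam_def Let_def by blast
qed

lemma case7:
  fixes m1 m2 :: int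
  assumes ev: "even (m1 + m2)" and nz: "(m1, m2) \<noteq> (0, 0)"
  shows "(let lam = (1/2) *\<^sub>R (of_int (5*(m1 + m2)) *\<^sub>R l 1 + of_int (3*m1 + 7*m2) *\<^sub>R l 2
               + of_int (m1 + 9*m2) *\<^sub>R l 3 + of_int (m1 + 5*m2) *\<^sub>R l 4
               + of_int (m1 + m2) *\<^sub>R l 5 + of_int (m1 - 3*m2) *\<^sub>R l 6)
     in lam \<in> D6 \<and> pi_par lam = (sqrt (2 / (2 + tau)) * (of_int m1 - of_int m2 + 2 * of_int m2 * tau) / 2) *\<^sub>R vector [1, 4*tau + 1, 1]
        \<and> similar_to (H3_orbit (pi_par lam)) std_great_rhombicosidodecahedron)"
proof -
  obtain t where t: "m1 + m2 = 2 * t" using evenE[OF ev] by metis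
  have m1r: "real_of_int m1 = 2 * of_int t - of_int m2" using arg_cong[OF t, of real_of_int] by simp
  define lam where "lam = (1/2) *\<^sub>R (of_int (5*(m1 + m2)) *\<^sub>R l 1 + of_int (3*m1 + 7*m2) *\<^sub>R l 2
               + of_int (m1 + 9*m2) *\<^sub>R l 3 + of_int (m1 + 5*m2) *\<^sub>R l 4
               + of_int (m1 + m2) *\<^sub>R l 5 + of_int (m1 - 3*m2) *\<^sub>R l 6)"
  have c: "lam $ 1 = of_int (5*t)"
     "lam $ 2 = of_int (3*t + 2*m2)"
     "lam $ 3 = of_int (t + 4*m2)"
     "lam $ 4 = of_int (t + 2*m2)"
     "lam $ 5 = of_int (t)"
     "lam $ 6 = of_int (t - 2*m2)"
    unfolding lam_def by (simp_all add: l_comp m1r algebra_simps)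
  have D: "lam \<in> D6"
  proof (rule D6I[where k = "6*t + 3*m2"])
    fix i show "lam $ i \<in> \<int>" using exhaust_6[of i] c by auto
    show "(\<Sum>i\<in>UNIV. lam $ i) = 2 * of_int (6*t + 3*m2)" unfolding sum_6 c by (simp add: algebra_simps)
  qed
  have P: "pi_par lam = (sqrt (2 / (2 + tau)) * (of_int m1 - of_int m2 + 2 * of_int m2 * tau) / 2) *\<^sub>R vector [1, 4*tau + 1, 1]"
    unfolding pi_par_comp c Kc m1r
    apply (simp add: vec_eq_iff forall_3 algebra_simps)
    using tau_sq by algebra
  have V: "vector [1, 4*tau + 1, 1] = interp ((2,0),(2,8),(2,0))"
    by (simp add: ci_def vec_eq_iff forall_3 tau2 algebra_simps)
  have O: "H3_orbit (interp ((2,0),(2,8),(2,0))) = interp ` set (LofS True (0,1) [((-2,2),(-2,2),(6,2)),((-4,4),(0,2),(2,4)),((-2,2),(2,2),(-2,6)),((-2,4),(4,0),(4,2)),((0,2),(6,0),(0,4))])"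
    by (rule orbit_eqS[where si = "(-1,1)"]; code_simp)
  have args: "ci (-2,2) = 1/tau"
    "ci (6,2) = 3+tau"
    "ci (-4,4) = 2/tau"
    "ci (0,2) = tau"
    "ci (2,4) = 1+2*tau"
    "ci (2,2) = tau^2"
    "ci (-2,6) = 3*tau - 1"
    "ci (-2,4) = 2*tau - 1"
    "ci (4,0) = 2"
    "ci (4,2) = 2+tau"
    "ci (6,0) = 3"
    "ci (0,4) = 2*tau"
    by (simp_all add: ci_def inv_tau two_div_tau tau2 tau3 field_simps)
  have T: "std_great_rhombicosidodecahedron = interp ` set (concat (map (\<lambda>(a,b,c). EPe a b c) [((-2,2),(-2,2),(6,2)),((-4,4),(0,2),(2,4)),((-2,2),(2,2),(-2,6)),((-2,4),(4,0),(4,2)),((0,2),(6,0),(0,4))]))"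
    unfolding std_great_rhombicosidodecahedron_def reps_img reps_nil args Un_empty_right Un_assoc ..
  have S: "similar_to (H3_orbit (pi_par lam)) std_great_rhombicosidodecahedron"
    unfolding P V by (rule sim_final[OF O T]) (use c_nz[OF nz] in simp, use tau_pos in simp)
  show ?thesis using D P S unfolding lam_def Let_def by blast
qed

theorem mainTheorem1:
  fixes m1 m2 :: int
  assumes "even (m1 + m2)" and "(m1, m2) \<noteq> (0, 0)"
  defines "c \<equiv> sqrt (2 / (2 + tau)) * (of_int m1 - of_int m2 + 2 * of_int m2 * tau)"
  shows
   "(let lam = of_int m1 *\<^sub>R l 1 + of_int m2 *\<^sub>R (l 2 + l 3 + l 4 + l 5 - l 6)
     in lam \<in> D6 \<and> pi_par lam = (c/2) *\<^sub>R vector [1, tau, 0]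
        \<and> similar_to (H3_orbit (pi_par lam)) std_icosahedron)
  \<and> (let lam = (1/2) *\<^sub>R (of_int (m1 + 3*m2) *\<^sub>R (l 1 + l 2 + l 3) + of_int (m1 - m2) *\<^sub>R (l 4 + l 5 + l 6))
     in lam \<in> D6 \<and> pi_par lam = (c/2) *\<^sub>R vector [0, tau^2, 1]
        \<and> similar_to (H3_orbit (pi_par lam)) std_dodecahedron)
  \<and> (let lam = of_int (m1 + m2) *\<^sub>R (l 1 + l 2) + of_int (2*m2) *\<^sub>R (l 3 + l 4)
     in lam \<in> D6 \<and> pi_par lam = c *\<^sub>R vector [0, tau, 0]
        \<and> similar_to (H3_orbit (pi_par lam)) std_icosidodecahedron)
  \<and> (let lam = of_int (2*m1 + m2) *\<^sub>R l 1 + of_int (m1 + 2*m2) *\<^sub>R l 2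
               + of_int m2 *\<^sub>R (3 *\<^sub>R l 3 + 3 *\<^sub>R l 4 + l 5 - l 6)
     in lam \<in> D6 \<and> pi_par lam = (c/2) *\<^sub>R vector [1, 3*tau, 0]
        \<and> similar_to (H3_orbit (pi_par lam)) std_truncated_icosahedron)
  \<and> (let lam = (1/2) *\<^sub>R (of_int (3*(m1 + m2)) *\<^sub>R l 1 + of_int (m1 + 5*m2) *\<^sub>R (l 2 + l 3)
               + of_int (m1 + m2) *\<^sub>R (l 4 + l 5) + of_int (m1 - 3*m2) *\<^sub>R l 6)
     in lam \<in> D6 \<and> pi_par lam = (c/2) *\<^sub>R vector [1, 2*tau + 1, 1]
        \<and> similar_to (H3_orbit (pi_par lam)) std_small_rhombicosidodecahedron)
  \<and> (let lam = (1/2) *\<^sub>R (of_int (3*m1 + 5*m2) *\<^sub>R (l 1 + l 2) + of_int (m1 + 7*m2) *\<^sub>R l 3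
               + of_int (m1 + 3*m2) *\<^sub>R l 4 + of_int (m1 - m2) *\<^sub>R (l 5 + l 6))
     in lam \<in> D6 \<and> pi_par lam = (c/2) *\<^sub>R vector [0, 3*tau + 1, 1]
        \<and> similar_to (H3_orbit (pi_par lam)) std_truncated_dodecahedron)
  \<and> (let lam = (1/2) *\<^sub>R (of_int (5*(m1 + m2)) *\<^sub>R l 1 + of_int (3*m1 + 7*m2) *\<^sub>R l 2
               + of_int (m1 + 9*m2) *\<^sub>R l 3 + of_int (m1 + 5*m2) *\<^sub>R l 4
               + of_int (m1 + m2) *\<^sub>R l 5 + of_int (m1 - 3*m2) *\<^sub>R l 6)
     in lam \<in> D6 \<and> pi_par lam = (c/2) *\<^sub>R vector [1, 4*tau + 1, 1]
        \<and> similar_to (H3_orbit (pi_par lam)) std_great_rhombicosidodecahedron)"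
  proof -
  show ?thesis
    unfolding c_def
    using case1[OF assms(1,2)] case2[OF assms(1,2)] case3[OF assms(1,2)] case4[OF assms(1,2)]
      case5[OF assms(1,2)] case6[OF assms(1,2)] case7[OF assms(1,2)]
    by (intro conjI)
qed

end
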